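(* Consider the single-input control-affine system $\dot{x} = f(x) + g(x)u$ and a Lipschitz continuous exponential CBF $h$ with relative degree $r<n$ and rates $\gamma_1,\dots,\gamma_r>0$, $\gamma_{\min}=\min_i\gamma_i$, written in cascading constraint coordinates as $\dot{\varphi} = A_\gamma \varphi + B\mu$, $\dot{\eta} = q_{\mathrm{cbf}}(\eta,\varphi)$, where $l_\varphi$ denotes the Lipschitz constant of $q_{\mathrm{cbf}}$ with respect to $\varphi$. Let $x_0\in S_\varphi$. Suppose the positive-feedback-stabilizable global exponential minimum phase condition holds: there is a Lipschitz feedback $\kappa_{\mathrm{ps}}:\mathbb{R}^{n-r}\to\mathbb{R}_{\ge0}$ such that $\dot\eta=q_{\mathrm{cbf}}(\eta,\Gamma\kappa_{\mathrm{ps}}(\eta))$ has a globally exponentially stable equilibrium $\eta_e$. Let $V$ be a (converse) Lyapunov function with constants $\alpha_1,\alpha_2,\alpha_3,\alpha_4>0$ such that $\alpha_1|\eta-\eta_e|^2\le V(\eta)\le\alpha_2|\eta-\eta_e|^2$, $|\partial V/\partial\eta|\le\alpha_3|\eta-\eta_e|$, and $\frac{\partial V}{\partial\eta}\cdot q_{\mathrm{cbf}}(\eta,\Gamma\kappa_{\mathrm{ps}}(\eta))\le-\alpha_4|\eta-\eta_e|^2$. If $\alpha_4>\left(\frac{\alpha_3 l_\varphi}{2}\right)^2$ and $\gamma_{\min}$ is large enough, then the system under the barrier constraint can stay bounded; in particular, setting $\mu(t)=\kappa_{\mathrm{ps}}(\eta(t))$ (which satisfies $\mu\ge0$), the trajectory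 satisfies $(\varphi(t),\eta(t))\to(\Gamma\kappa_{\mathrm{ps}}(\eta_e),\eta_e)$ and thus stays bounded.
   Context: The system $\dot x = f(x)+g(x)u$ has $f,g:\mathbb{R}^n\to\mathbb{R}^n$ Lipschitz and $u\in\mathbb{R}$. $L_f$, $L_g$ denote Lie derivatives. $h$ has relative degree $r$ at $x$ if $L_gL_f^k h\equiv 0$ near $x$ for $k=0,\dots,r-2$ and $L_gL_f^{r-1}h(x)\neq 0$. An exponential CBF with relative degree $r$ is $h:\mathbb{R}^n\to\mathbb{R}$ with relative degree $r$ on $\mathcal{C}=\{h\ge 0\}$, $\partial h/\partial x\neq0$ on $\{h=0\}$, and $\sup_{u}[L_f^r h(x)+L_gL_f^{r-1}h(x)u+k^\top\xi(x)]\ge 0$ on $\mathcal{C}$, where $\xi=[h,L_fh,\dots,L_f^{r-1}h]^\top$ and $s^r+k_rs^{r-1}+\dots+k_1=(s+\gamma_1)\cdots(s+\gamma_r)$, $\gamma_i>0$. Virtual control input: $\mu(x,u)=L_f^rh+L_gL_f^{r-1}h\,u+k^\top\xi$; barrier constraint: $\mu\ge0$. Cascading constraint vector: $\varphi_1=h$, $\varphi_{i+1}=\dot\varphi_i+\gamma_i\varphi_i$; $S_\varphi=\{x:\varphi(x)\in\mathbb{R}^r_{\ge0}\}$. $A_\gamma$ is the $r\times r$ upper bidiagonal matrix with diagonal $-\gamma_1,\dots,-\gamma_r$ and superdiagonal entries $1$; $B=[0,\dots,0,1]^\top$; $\Gamma=-A_\gamma^{-1}B=[(\gamma_1\cdots\gamma_r)^{-1},(\gamma_2\cdots\gamma_r)^{-1},\dots,\gamma_r^{-1}]^\top$.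 The internal state $\eta\in\mathbb{R}^{n-r}$ is chosen so that $x\mapsto(\varphi,\eta)$ is a diffeomorphism and $L_g\eta_j\equiv 0$; then $\dot\varphi=A_\gamma\varphi+B\mu$, $\dot\eta=q_{\mathrm{cbf}}(\eta,\varphi)$ with $q_{\mathrm{cbf}}$ Lipschitz in $\eta$ and $\varphi$. Any signal $\mu(t)$ can be realized by a choice of $u$. *)

theory Defs
  imports "HOL-Analysis.Analysis"
begin

text \<open>Vectors in R^r are represented as functions nat => real, of which only the
  components 0..r-1 (0-based) are meaningful. The 1-based index i of the paper
  corresponds to index i-1 here.\<close>

definition vnorm :: "nat \<Rightarrow> (nat \<Rightarrow> real) \<Rightarrow> real" where
  "vnorm r v = sqrt (\<Sum>i<r. (v i)^2)"

text \<open>Gamma = - A_gamma^{-1} B, i.e. Gamma_i = 1/(gamma_i * ... * gamma_r) (1-based).\<close>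
definition Gam :: "(nat \<Rightarrow> real) \<Rightarrow> nat \<Rightarrow> nat \<Rightarrow> real" where
  "Gam \<gamma> r i = 1 / (\<Prod>j\<in>{i..<r}. \<gamma> j)"

text \<open>i-th component (0-based, i < r) of A_gamma phi + B mu, where A_gamma is upper
  bidiagonal with diagonal -gamma_1..-gamma_r and superdiagonal 1, B = e_r.\<close>
definition casc_rhs :: "nat \<Rightarrow> (nat \<Rightarrow> real) \<Rightarrow> (nat \<Rightarrow> real) \<Rightarrow> real \<Rightarrow> nat \<Rightarrow> real" where
  "casc_rhs r \<gamma> \<phi> \<mu> i = - \<gamma> i * \<phi> i + (if Suc i < r then \<phi> (Suc i) else \<mu>)"

end

theory Submission
  imports Defs "HOL-Real_Asymp.Real_Asymp"
begin

lemma vnorm_L2: "vnorm r v = L2_set v {..<r}"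
  by (simp add: vnorm_def L2_set_def)

lemma vnorm_nonneg: "vnorm r v \<ge> 0"
proof -
  have "0 \<le> (\<Sum>i<r. (v i)^2)" by (rule sum_nonneg) simp
  then show ?thesis unfolding vnorm_def by simp
qed

lemma vnorm_sq: "(vnorm r v)^2 = (\<Sum>i<r. (v i)^2)"
proof -
  have "0 \<le> (\<Sum>i<r. (v i)^2)" by (rule sum_nonneg) simp
  then show ?thesis unfolding vnorm_def by simp
qed

lemma vnorm_triangle: "vnorm r (\<lambda>i. u i + v i) \<le> vnorm r u + vnorm r v"
  unfolding vnorm_L2 by (rule L2_set_triangle_ineq)

lemma vnorm_le_sum_abs: "vnorm r v \<le> (\<Sum>i<r. \<bar>v i\<bar>)"
  unfolding vnorm_L2 by (rule L2_set_le_sum_abs)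

lemma vnorm_comp: "i < r \<Longrightarrow> \<bar>v i\<bar> \<le> vnorm r v"
proof -
  assume "i < r"
  have "\<bar>v i\<bar> \<le> L2_set (\<lambda>j. \<bar>v j\<bar>) {..<r}"
    by (rule member_le_L2_set) (use \<open>i < r\<close> in auto)
  also have "L2_set (\<lambda>j. \<bar>v j\<bar>) {..<r} = vnorm r v"
    by (simp add: vnorm_L2 L2_set_def)
  finally show ?thesis .
qed

lemma nonincr_from_deriv:
  fixes E E' :: "real \<Rightarrow> real"
  assumes "\<And>t. t \<ge> 0 \<Longrightarrow> (E has_real_derivative E' t) (at t within {0..})"
    and "\<And>t. t \<ge> 0 \<Longrightarrow> E' t \<le> 0"
    and "t \<ge> 0"
  shows "E t \<le> E 0"
proof -
  have "\<exists>x\<in>{0..t}. E t - E 0 = (\<lambda>x. (*) (E' x)) x (t - 0)"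
  proof (rule mvt_very_simple[OF assms(3)])
    fix x assume "0 \<le> x" "x \<le> t"
    then have "(E has_real_derivative E' x) (at x within {0..})" using assms(1) by auto
    then have "(E has_derivative (*) (E' x)) (at x within {0..})"
      by (simp add: has_field_derivative_def)
    then show "(E has_derivative (\<lambda>x. (*) (E' x)) x) (at x within {0..t})"
      by (rule has_derivative_subset) auto
  qed
  then obtain x where "x \<in> {0..t}" "E t - E 0 = E' x * t" by auto
  moreover have "E' x \<le> 0" using assms(2) \<open>x \<in> {0..t}\<close> by auto
  moreover have "E' x * t \<le> 0" using \<open>E' x \<le> 0\<close> assms(3) by (simp add: mult_nonpos_nonneg)
  ultimately show ?thesis by linarith
qed

lemma shift_sum_le:
  fixes f :: "nat \<Rightarrow> real"
  assumes "\<And>i. f i \<ge> 0"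
  shows "(\<Sum>i<r. (if Suc i < r then f (Suc i) else 0)) \<le> (\<Sum>i<r. f i)"
proof (cases r)
  case 0 then show ?thesis by simp
next
  case (Suc m)
  have "(\<Sum>i<r. (if Suc i < r then f (Suc i) else 0)) = (\<Sum>i<m. f (Suc i))"
    unfolding Suc by (simp add: lessThan_Suc)
  also have "\<dots> \<le> f 0 + (\<Sum>i<m. f (Suc i))" using assms[of 0] by simp
  also have "\<dots> = (\<Sum>i<Suc m. f i)" by (rule sum.lessThan_Suc_shift[symmetric])
  finally show ?thesis using Suc by simp
qed

lemma last_sum:
  fixes F :: "nat \<Rightarrow> real"
  assumes "r \<ge> 1"
  shows "(\<Sum>i<r. (if Suc i < r then 0 else F i)) = F (r - 1)"
proof -
  obtain m where r: "r = Suc m" using assms by (cases r) auto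
  have "(\<Sum>i<r. (if Suc i < r then 0 else F i)) = (\<Sum>i<Suc m. (if i = m then F i else 0))"
    unfolding r by (rule sum.cong) auto
  also have "\<dots> = F m" by simp
  finally show ?thesis using r by simp
qed

lemma Gam_bounds:
  fixes \<gamma> :: "nat \<Rightarrow> real"
  assumes "g \<ge> 1" "\<And>i. i < r \<Longrightarrow> g \<le> \<gamma> i" "i < r"
  shows "0 < Gam \<gamma> r i \<and> Gam \<gamma> r i \<le> 1 / g"
proof -
  have pos: "\<And>j. j \<in> {i..<r} \<Longrightarrow> 0 < \<gamma> j" using assms by force
  have "(\<Prod>j\<in>{i..<r}. g) \<le> (\<Prod>j\<in>{i..<r}. \<gamma> j)"
    by (rule prod_mono) (use assms in auto)
  moreover have "(\<Prod>j\<in>{i..<r}. g) = g ^ (r - i)" by simp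
  moreover have "g ^ (r - i) \<ge> g ^ 1"
    by (rule power_increasing) (use assms in auto)
  ultimately have P: "g \<le> (\<Prod>j\<in>{i..<r}. \<gamma> j)" by simp
  have "0 < (\<Prod>j\<in>{i..<r}. \<gamma> j)" using pos by (intro prod_pos) auto
  then show ?thesis using P assms(1) by (simp add: Gam_def frac_le)
qed

lemma Gam_eq:
  fixes \<gamma> :: "nat \<Rightarrow> real"
  assumes "\<And>j. j < r \<Longrightarrow> 0 < \<gamma> j" "i < r"
  shows "- \<gamma> i * Gam \<gamma> r i + (if Suc i < r then Gam \<gamma> r (Suc i) else 1) = 0"
proof -
  have pr: "(\<Prod>j\<in>{i..<r}. \<gamma> j) = \<gamma> i * (\<Prod>j\<in>{Suc i..<r}. \<gamma> j)"
    using assms(2) by (rule prod.atLeast_Suc_lessThan)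
  have "0 < (\<Prod>j\<in>{Suc i..<r}. \<gamma> j)" using assms(1) by (intro prod_pos) auto
  moreover have "0 < \<gamma> i" using assms by auto
  ultimately show ?thesis
    unfolding Gam_def pr by (auto simp: field_simps)
qed


theorem theorem6:
  fixes r :: nat
    and q :: "'b::euclidean_space \<Rightarrow> (nat \<Rightarrow> real) \<Rightarrow> 'b"
    and \<kappa> :: "'b \<Rightarrow> real"
    and V :: "'b \<Rightarrow> real"
    and DV :: "'b \<Rightarrow> 'b"
    and \<eta>e :: 'b
    and L\<eta> l\<phi> L\<kappa> \<alpha>1 \<alpha>2 \<alpha>3 \<alpha>4 :: real
  assumes r_pos: "1 \<le> r"
    and q_lip_eta: "\<And>a b p. norm (q a p - q b p) \<le> L\<eta> * norm (a - b)"
    and q_lip_phi: "\<And>a p p'. norm (q a p - q a p') \<le> l\<phi> * vnorm r (\<lambda>i. p i - p' i)"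
    and kappa_lip: "\<And>a b. \<bar>\<kappa> a - \<kappa> b\<bar> \<le> L\<kappa> * norm (a - b)"
    and kappa_nonneg: "\<And>a. \<kappa> a \<ge> 0"
    and alpha_pos: "\<alpha>1 > 0" "\<alpha>2 > 0" "\<alpha>3 > 0" "\<alpha>4 > 0"
    and V_deriv: "\<And>a. (V has_derivative (\<lambda>h. DV a \<bullet> h)) (at a)"
    and V_bounds: "\<And>a. \<alpha>1 * (norm (a - \<eta>e))^2 \<le> V a \<and> V a \<le> \<alpha>2 * (norm (a - \<eta>e))^2"
    and DV_bound: "\<And>a. norm (DV a) \<le> \<alpha>3 * norm (a - \<eta>e)"
    and alpha_cond: "\<alpha>4 > (\<alpha>3 * l\<phi> / 2)^2"
  shows "\<exists>\<gamma>star>0. \<forall>\<gamma>::nat \<Rightarrow> real. (\<forall>i<r. \<gamma>star \<le> \<gamma> i) \<longrightarrow>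
           q \<eta>e (\<lambda>i. Gam \<gamma> r i * \<kappa> \<eta>e) = 0 \<longrightarrow>
           (\<forall>a. DV a \<bullet> q a (\<lambda>i. Gam \<gamma> r i * \<kappa> a) \<le> - \<alpha>4 * (norm (a - \<eta>e))^2) \<longrightarrow>
           (\<forall>(\<phi>::real \<Rightarrow> nat \<Rightarrow> real) (\<eta>::real \<Rightarrow> 'b).
              (\<forall>i<r. \<phi> 0 i \<ge> 0) \<longrightarrow>
              (\<forall>t\<ge>0. \<forall>i<r. ((\<lambda>s. \<phi> s i) has_real_derivative
                        casc_rhs r \<gamma> (\<phi> t) (\<kappa> (\<eta> t)) i) (at t within {0..})) \<longrightarrow>
              (\<forall>t\<ge>0. (\<eta> has_vector_derivative q (\<eta> t) (\<phi> t)) (at t within {0..})) \<longrightarrow>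
              (\<forall>i<r. ((\<lambda>t. \<phi> t i) \<longlongrightarrow> Gam \<gamma> r i * \<kappa> \<eta>e) at_top)
              \<and> (\<eta> \<longlongrightarrow> \<eta>e) at_top
              \<and> (\<exists>M. \<forall>t\<ge>0. vnorm r (\<phi> t) + norm (\<eta> t) \<le> M))"
proof -
  define L where "L = \<bar>L\<kappa>\<bar>"
  define l where "l = \<bar>l\<phi>\<bar>"
  define bb where "bb = \<alpha>3 * l + 2 * L"
  define gs where "gs = max 1 (max (2 + bb^2 / \<alpha>4) (2 * \<alpha>3 * l * L * real r / \<alpha>4))"
  have L0: "L \<ge> 0" "l \<ge> 0" unfolding L_def l_def by auto
  have kl: "\<bar>\<kappa> a - \<kappa> b\<bar> \<le> L * norm (a - b)" for a b
    using kappa_lip[of a b] mult_right_mono[OF abs_ge_self norm_ge_zero, of L\<kappa> "a - b"]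
    unfolding L_def by linarith
  have ql: "norm (q a p - q a p') \<le> l * vnorm r (\<lambda>i. p i - p' i)" for a p p'
    using q_lip_phi[of a p p'] mult_right_mono[OF abs_ge_self vnorm_nonneg, of l\<phi> r "\<lambda>i. p i - p' i"]
    unfolding l_def by linarith
  have gs1: "gs \<ge> 1" and gs2: "gs \<ge> 2 + bb^2 / \<alpha>4"
    and gs3: "gs \<ge> 2 * \<alpha>3 * l * L * real r / \<alpha>4"
    unfolding gs_def by auto
  show ?thesis
  proof (rule exI[of _ gs], rule conjI)
    show "gs > 0" using gs1 by simp
    show "\<forall>\<gamma>::nat \<Rightarrow> real. (\<forall>i<r. gs \<le> \<gamma> i) \<longrightarrow>
           q \<eta>e (\<lambda>i. Gam \<gamma> r i * \<kappa> \<eta>e) = 0 \<longrightarrow>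
           (\<forall>a. DV a \<bullet> q a (\<lambda>i. Gam \<gamma> r i * \<kappa> a) \<le> - \<alpha>4 * (norm (a - \<eta>e))^2) \<longrightarrow>
           (\<forall>(\<phi>::real \<Rightarrow> nat \<Rightarrow> real) (\<eta>::real \<Rightarrow> 'b).
              (\<forall>i<r. \<phi> 0 i \<ge> 0) \<longrightarrow>
              (\<forall>t\<ge>0. \<forall>i<r. ((\<lambda>s. \<phi> s i) has_real_derivative
                        casc_rhs r \<gamma> (\<phi> t) (\<kappa> (\<eta> t)) i) (at t within {0..})) \<longrightarrow>
              (\<forall>t\<ge>0. (\<eta> has_vector_derivative q (\<eta> t) (\<phi> t)) (at t within {0..})) \<longrightarrow>
              (\<forall>i<r. ((\<lambda>t. \<phi> t i) \<longlongrightarrow> Gam \<gamma> r i * \<kappa> \<eta>e) at_top)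
              \<and> (\<eta> \<longlongrightarrow> \<eta>e) at_top
              \<and> (\<exists>M. \<forall>t\<ge>0. vnorm r (\<phi> t) + norm (\<eta> t) \<le> M))"
    proof (intro allI impI)
      fix \<gamma> :: "nat \<Rightarrow> real" and \<phi> :: "real \<Rightarrow> nat \<Rightarrow> real" and \<eta> :: "real \<Rightarrow> 'b"
      assume gam: "\<forall>i<r. gs \<le> \<gamma> i"
        and qeq: "q \<eta>e (\<lambda>i. Gam \<gamma> r i * \<kappa> \<eta>e) = 0"
        and Vdec: "\<forall>a. DV a \<bullet> q a (\<lambda>i. Gam \<gamma> r i * \<kappa> a) \<le> - \<alpha>4 * (norm (a - \<eta>e))^2"
        and init: "\<forall>i<r. \<phi> 0 i \<ge> 0"
        and phid: "\<forall>t\<ge>0. \<forall>i<r. ((\<lambda>s. \<phi> s i) has_real_derivative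
                        casc_rhs r \<gamma> (\<phi> t) (\<kappa> (\<eta> t)) i) (at t within {0..})"
        and etad: "\<forall>t\<ge>0. (\<eta> has_vector_derivative q (\<eta> t) (\<phi> t)) (at t within {0..})"
      define k0 where "k0 = \<kappa> \<eta>e"
      define P where "P i = Gam \<gamma> r i * k0" for i
      define z where "z t i = \<phi> t i - P i" for t i
      define x where "x t = norm (\<eta> t - \<eta>e)" for t
      define S where "S t = (\<Sum>i<r. (z t i)^2)" for t
      define W where "W t = V (\<eta> t) + S t" for t
      define c where "c t i = casc_rhs r \<gamma> (\<phi> t) (\<kappa> (\<eta> t)) i" for t i
      define dW where "dW t = DV (\<eta> t) \<bullet> q (\<eta> t) (\<phi> t) + (\<Sum>i<r. 2 * z t i * c t i)" for t
      have gge: "\<And>i. i < r \<Longrightarrow> gs \<le> \<gamma> i" using gam by auto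
      have gpos: "\<And>i. i < r \<Longrightarrow> 0 < \<gamma> i" using gge gs1 by force
      have Gb: "\<And>i. i < r \<Longrightarrow> 0 < Gam \<gamma> r i \<and> Gam \<gamma> r i \<le> 1 / gs"
        using Gam_bounds[of gs r \<gamma>] gs1 gge by blast
      have ceq: "c t i = - \<gamma> i * z t i + (if Suc i < r then z t (Suc i) else \<kappa> (\<eta> t) - k0)"
        if "i < r" for t i
      proof -
        have E: "- \<gamma> i * Gam \<gamma> r i + (if Suc i < r then Gam \<gamma> r (Suc i) else 1) = 0"
          using Gam_eq[OF gpos that] .
        show ?thesis
        proof (cases "Suc i < r")
          case True
          then have "Gam \<gamma> r (Suc i) = \<gamma> i * Gam \<gamma> r i" using E by simp
          then show ?thesis using True
            by (simp add: c_def casc_rhs_def z_def P_def algebra_simps)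
        next
          case False
          then have "\<gamma> i * Gam \<gamma> r i = 1" using E by simp
          then have "\<gamma> i * (Gam \<gamma> r i * k0) = k0" by (simp add: mult.assoc[symmetric])
          then show ?thesis using False
            by (simp add: c_def casc_rhs_def z_def P_def algebra_simps)
        qed
      qed
      have dS: "(S has_real_derivative (\<Sum>i<r. 2 * z t i * c t i)) (at t within {0..})"
        if "t \<ge> 0" for t
      proof -
        have "((\<lambda>s. (\<lambda>i. (z s i)^2) i) has_real_derivative 2 * z t i * c t i) (at t within {0..})"
          if "i \<in> {..<r}" for i
        proof -
          have "((\<lambda>s. \<phi> s i) has_real_derivative c t i) (at t within {0..})"
            using phid \<open>t \<ge> 0\<close> that unfolding c_def by auto
          then show ?thesis unfolding z_def by (auto intro!: derivative_eq_intros)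
        qed
        then have "((\<lambda>s. sum (\<lambda>i. (z s i)^2) {..<r}) has_real_derivative
            sum (\<lambda>i. 2 * z t i * c t i) {..<r}) (at t within {0..})"
          by (rule DERIV_sum)
        then show ?thesis unfolding S_def by simp
      qed
      have dV: "((\<lambda>s. V (\<eta> s)) has_real_derivative DV (\<eta> t) \<bullet> q (\<eta> t) (\<phi> t)) (at t within {0..})"
        if "t \<ge> 0" for t
      proof -
        have e1: "(\<eta> has_derivative (\<lambda>h. h *\<^sub>R q (\<eta> t) (\<phi> t))) (at t within {0..})"
          using etad that by (simp add: has_vector_derivative_def)
        have e2: "(V has_derivative (\<lambda>h. DV (\<eta> t) \<bullet> h)) (at (\<eta> t) within \<eta> ` {0..})"
          by (rule has_derivative_subset[OF V_deriv]) auto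
        have "(V \<circ> \<eta> has_derivative (\<lambda>h. DV (\<eta> t) \<bullet> h) \<circ> (\<lambda>h. h *\<^sub>R q (\<eta> t) (\<phi> t))) (at t within {0..})"
          by (rule diff_chain_within[OF e1 e2])
        moreover have "(\<lambda>h. DV (\<eta> t) \<bullet> h) \<circ> (\<lambda>h. h *\<^sub>R q (\<eta> t) (\<phi> t))
            = (*) (DV (\<eta> t) \<bullet> q (\<eta> t) (\<phi> t))"
          by (rule ext) (simp add: mult.commute)
        ultimately show ?thesis by (simp add: has_field_derivative_def o_def)
      qed
      have dWd: "(W has_real_derivative dW t) (at t within {0..})" if "t \<ge> 0" for t
        using DERIV_add[OF dV[OF that] dS[OF that]] unfolding W_def dW_def by simp
      have Wlow: "\<alpha>1 * (x t)^2 + S t \<le> W t" for t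
        using V_bounds[of "\<eta> t"] unfolding W_def x_def by simp
      have Wup: "W t \<le> \<alpha>2 * (x t)^2 + S t" for t
        using V_bounds[of "\<eta> t"] unfolding W_def x_def by simp
      have Sy: "S t = (vnorm r (z t))^2" for t
        unfolding S_def vnorm_sq by simp
      have S0: "S t \<ge> 0" for t unfolding S_def by (intro sum_nonneg) simp
      have x0: "x t \<ge> 0" for t unfolding x_def by simp
      have kx: "\<bar>\<kappa> (\<eta> t) - k0\<bar> \<le> L * x t" for t
        unfolding k0_def x_def by (rule kl)
      have dSb: "(\<Sum>i<r. 2 * z t i * c t i) \<le> - 2 * (gs - 1) * S t + 2 * L * x t * vnorm r (z t)" for t
      proof -
        have "(\<Sum>i<r. 2 * z t i * c t i) \<le> (\<Sum>i<r. (1 - 2 * gs) * (z t i)^2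
             + (if Suc i < r then (z t (Suc i))^2 else 0)
             + (if Suc i < r then 0 else 2 * \<bar>z t i\<bar> * (L * x t)))"
        proof (rule sum_mono)
          fix i assume "i \<in> {..<r}"
          then have ir: "i < r" by simp
          have a1: "- 2 * \<gamma> i * (z t i)^2 \<le> - 2 * gs * (z t i)^2"
            using gge[OF ir] by (simp add: mult_right_mono)
          show "2 * z t i * c t i \<le> (1 - 2 * gs) * (z t i)^2
             + (if Suc i < r then (z t (Suc i))^2 else 0)
             + (if Suc i < r then 0 else 2 * \<bar>z t i\<bar> * (L * x t))"
          proof (cases "Suc i < r")
            case True
            have "2 * z t i * z t (Suc i) \<le> (z t i)^2 + (z t (Suc i))^2"
              using sum_squares_bound[of "z t i" "z t (Suc i)"] by simp
            have cc: "c t i = - \<gamma> i * z t i + z t (Suc i)" using ceq[OF ir] True by simp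
            show ?thesis using True a1 \<open>2 * z t i * z t (Suc i) \<le> (z t i)^2 + (z t (Suc i))^2\<close>
              by (simp add: cc algebra_simps power2_eq_square)
          next
            case False
            have "2 * z t i * (\<kappa> (\<eta> t) - k0) \<le> 2 * \<bar>z t i\<bar> * \<bar>\<kappa> (\<eta> t) - k0\<bar>"
              by (simp add: abs_mult[symmetric] mult.assoc)
            also have "\<dots> \<le> 2 * \<bar>z t i\<bar> * (L * x t)"
              using kx[of t] by (simp add: mult_left_mono)
            finally have h: "2 * z t i * (\<kappa> (\<eta> t) - k0) \<le> 2 * \<bar>z t i\<bar> * (L * x t)" .
            have cc: "c t i = - \<gamma> i * z t i + (\<kappa> (\<eta> t) - k0)" using ceq[OF ir] False by simp
            have e1: "2 * z t i * c t i = -2 * (\<gamma> i * (z t i)^2) + 2 * z t i * (\<kappa> (\<eta> t) - k0)"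
              by (simp add: cc power2_eq_square algebra_simps)
            have e2: "(1 - 2 * gs) * (z t i)^2 = (z t i)^2 - 2 * (gs * (z t i)^2)"
              by (simp add: algebra_simps)
            have a2: "gs * (z t i)^2 \<le> \<gamma> i * (z t i)^2"
              using gge[OF ir] by (simp add: mult_right_mono)
            have "2 * z t i * c t i \<le> (1 - 2 * gs) * (z t i)^2 + 2 * \<bar>z t i\<bar> * (L * x t)"
              using a2 h e1 e2 zero_le_power2[of "z t i"] by linarith
            then show ?thesis using False by simp
          qed
        qed
        also have "\<dots> = (1 - 2 * gs) * S t
             + (\<Sum>i<r. (if Suc i < r then (z t (Suc i))^2 else 0))
             + (\<Sum>i<r. (if Suc i < r then 0 else 2 * \<bar>z t i\<bar> * (L * x t)))"
          by (simp add: sum.distrib sum_distrib_left S_def)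
        also have "(\<Sum>i<r. (if Suc i < r then (z t (Suc i))^2 else 0)) \<le> S t"
          unfolding S_def by (rule shift_sum_le) simp
        also have "(\<Sum>i<r. (if Suc i < r then 0 else 2 * \<bar>z t i\<bar> * (L * x t)))
             = 2 * \<bar>z t (r - 1)\<bar> * (L * x t)"
          by (rule last_sum[OF r_pos])
        also have "2 * \<bar>z t (r - 1)\<bar> * (L * x t) \<le> 2 * vnorm r (z t) * (L * x t)"
          using vnorm_comp[of "r - 1" r "z t"] r_pos L0 x0[of t]
          by (intro mult_right_mono) auto
        finally show ?thesis by (simp add: algebra_simps)
      qed
      have dVb: "DV (\<eta> t) \<bullet> q (\<eta> t) (\<phi> t) \<le> - (\<alpha>4 / 2) * (x t)^2 + \<alpha>3 * l * x t * vnorm r (z t)" for t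
      proof -
        define a where "a = \<eta> t"
        define p0 where "p0 i = Gam \<gamma> r i * \<kappa> a" for i
        have xa: "x t = norm (a - \<eta>e)" unfolding a_def x_def by simp
        have "DV a \<bullet> q a (\<phi> t) = DV a \<bullet> q a p0 + DV a \<bullet> (q a (\<phi> t) - q a p0)"
          by (simp add: inner_diff_right)
        also have "DV a \<bullet> q a p0 \<le> - \<alpha>4 * (x t)^2"
          using Vdec xa unfolding p0_def by auto
        also have "DV a \<bullet> (q a (\<phi> t) - q a p0) \<le> norm (DV a) * norm (q a (\<phi> t) - q a p0)"
          by (rule norm_cauchy_schwarz)
        also have "\<dots> \<le> (\<alpha>3 * x t) * (l * vnorm r (\<lambda>i. \<phi> t i - p0 i))"
          using DV_bound[of a] ql[of a "\<phi> t" p0] xa alpha_pos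
          by (intro mult_mono) auto
        also have "vnorm r (\<lambda>i. \<phi> t i - p0 i) \<le> vnorm r (z t) + L * x t * real r / gs"
        proof -
          have "(\<lambda>i. \<phi> t i - p0 i) = (\<lambda>i. z t i + Gam \<gamma> r i * (k0 - \<kappa> a))"
            by (rule ext) (simp add: z_def P_def p0_def algebra_simps)
          then have "vnorm r (\<lambda>i. \<phi> t i - p0 i) \<le> vnorm r (z t) + vnorm r (\<lambda>i. Gam \<gamma> r i * (k0 - \<kappa> a))"
            using vnorm_triangle[of r "z t" "\<lambda>i. Gam \<gamma> r i * (k0 - \<kappa> a)"] by simp
          also have "vnorm r (\<lambda>i. Gam \<gamma> r i * (k0 - \<kappa> a)) \<le> (\<Sum>i<r. \<bar>Gam \<gamma> r i * (k0 - \<kappa> a)\<bar>)"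
            by (rule vnorm_le_sum_abs)
          also have "\<dots> \<le> (\<Sum>i<r. (1 / gs) * (L * x t))"
          proof (rule sum_mono)
            fix i assume "i \<in> {..<r}"
            then have G: "0 < Gam \<gamma> r i" "Gam \<gamma> r i \<le> 1 / gs" using Gb by auto
            have k: "\<bar>k0 - \<kappa> a\<bar> \<le> L * x t" using kx[of t] unfolding a_def by (simp add: abs_minus_commute)
            show "\<bar>Gam \<gamma> r i * (k0 - \<kappa> a)\<bar> \<le> (1 / gs) * (L * x t)"
              unfolding abs_mult using G k gs1 by (intro mult_mono) auto
          qed
          also have "\<dots> = L * x t * real r / gs" by simp
          finally show ?thesis by simp
        qed
        finally have "DV a \<bullet> q a (\<phi> t) \<le> - \<alpha>4 * (x t)^2 + (\<alpha>3 * x t) * (l * (vnorm r (z t) + L * x t * real r / gs))"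
          using L0 x0[of t] alpha_pos
          by (smt (verit) mult_left_mono mult_nonneg_nonneg)
        moreover have "\<alpha>3 * l * L * real r / gs \<le> \<alpha>4 / 2"
          using gs3 gs1 alpha_pos by (simp add: field_simps)
        then have "(\<alpha>3 * l * L * real r / gs) * (x t)^2 \<le> (\<alpha>4 / 2) * (x t)^2"
          by (intro mult_right_mono) auto
        moreover have "(\<alpha>3 * x t) * (l * (vnorm r (z t) + L * x t * real r / gs))
           = \<alpha>3 * l * x t * vnorm r (z t) + (\<alpha>3 * l * L * real r / gs) * (x t)^2"
          by (simp add: algebra_simps power2_eq_square add_divide_distrib)
        ultimately show ?thesis unfolding a_def by linarith
      qed
      define \<mu> where "\<mu> = min (\<alpha>4 / 4) 1"
      define m where "m = max \<alpha>2 1"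
      define \<beta> where "\<beta> = \<mu> / m"
      have \<mu>pos: "\<mu> > 0" unfolding \<mu>_def using alpha_pos by simp
      have mpos: "m \<ge> 1" unfolding m_def by simp
      have \<beta>pos: "\<beta> > 0" unfolding \<beta>_def using \<mu>pos mpos by simp
      have dWb: "dW t \<le> - \<beta> * W t" for t
      proof -
        define X where "X = x t"
        define Y where "Y = vnorm r (z t)"
        have SY: "S t = Y^2" unfolding Y_def by (rule Sy)
        have "dW t \<le> - (\<alpha>4 / 2) * X^2 + bb * X * Y - 2 * (gs - 1) * Y^2"
          using dVb[of t] dSb[of t] unfolding dW_def X_def Y_def bb_def SY[unfolded Y_def]
          by (simp add: algebra_simps)
        also have "bb * X * Y \<le> (\<alpha>4 / 4) * X^2 + (bb^2 / \<alpha>4) * Y^2"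
        proof -
          have "0 \<le> (\<alpha>4 / 2 * X - bb * Y)^2" by simp
          then have "\<alpha>4 * (bb * X * Y) \<le> \<alpha>4 * ((\<alpha>4 / 4) * X^2 + (bb^2 / \<alpha>4) * Y^2)"
            using alpha_pos by (simp add: algebra_simps power2_eq_square)
          then show ?thesis using alpha_pos by simp
        qed
        also have "2 * (gs - 1) * Y^2 \<ge> (1 + bb^2 / \<alpha>4) * Y^2"
        proof (rule mult_right_mono)
          have "bb^2 / \<alpha>4 \<ge> 0" using alpha_pos by simp
          then show "1 + bb^2 / \<alpha>4 \<le> 2 * (gs - 1)" using gs2 by (simp add: algebra_simps)
        qed simp
        then have "- (\<alpha>4 / 2) * X^2 + ((\<alpha>4 / 4) * X^2 + (bb^2 / \<alpha>4) * Y^2) - 2 * (gs - 1) * Y^2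
            \<le> - (\<alpha>4 / 4) * X^2 - Y^2" by (simp add: algebra_simps)
        also have "- (\<alpha>4 / 4) * X^2 - Y^2 \<le> - \<mu> * (X^2 + Y^2)"
          unfolding \<mu>_def by (simp add: algebra_simps mult_right_mono min_def)
        also have "- \<mu> * (X^2 + Y^2) \<le> - \<beta> * W t"
        proof -
          have "W t \<le> \<alpha>2 * X^2 + Y^2" using Wup[of t] SY unfolding X_def by simp
          also have "\<dots> \<le> m * (X^2 + Y^2)"
          proof -
            have "\<alpha>2 * X^2 \<le> m * X^2" unfolding m_def by (intro mult_right_mono) auto
            moreover have "1 * Y^2 \<le> m * Y^2" unfolding m_def by (intro mult_right_mono) auto
            ultimately show ?thesis by (simp add: distrib_left)
          qed
          finally have "\<beta> * W t \<le> \<beta> * (m * (X^2 + Y^2))" using \<beta>pos by simp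
          also have "\<dots> = \<mu> * (X^2 + Y^2)" unfolding \<beta>_def using mpos by simp
          finally show ?thesis by simp
        qed
        finally show ?thesis by simp
      qed
      define E where "E t = W t * exp (\<beta> * t)" for t
      have Ed: "(E has_real_derivative (dW t + \<beta> * W t) * exp (\<beta> * t)) (at t within {0..})"
        if "t \<ge> 0" for t
        unfolding E_def using dWd[OF that]
        by (auto intro!: derivative_eq_intros simp: algebra_simps)
      have Edec: "E t \<le> E 0" if "t \<ge> 0" for t
      proof (rule nonincr_from_deriv[OF Ed])
        fix s :: real
        have "dW s + \<beta> * W s \<le> 0" using dWb[of s] by simp
        then show "(dW s + \<beta> * W s) * exp (\<beta> * s) \<le> 0"
          by (simp add: mult_nonpos_nonneg)
      qed (use that in auto)
      have Wnn: "W t \<ge> 0" for t using Wlow[of t] S0[of t] alpha_pos by (smt (verit) zero_le_power2 mult_nonneg_nonneg)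
      have Wexp: "W t \<le> W 0 * exp (- \<beta> * t)" if "t \<ge> 0" for t
      proof -
        have "W t * exp (\<beta> * t) \<le> W 0" using Edec[OF that] unfolding E_def by simp
        then have "W t * exp (\<beta> * t) * exp (- \<beta> * t) \<le> W 0 * exp (- \<beta> * t)"
          by (intro mult_right_mono) auto
        then show ?thesis by (simp add: mult.assoc exp_add[symmetric])
      qed
      have Wle0: "W t \<le> W 0" if "t \<ge> 0" for t
      proof -
        have "exp (- \<beta> * t) \<le> 1" using \<beta>pos that by simp
        then have "W 0 * exp (- \<beta> * t) \<le> W 0" using Wnn[of 0] by (simp add: mult_left_le)
        then show ?thesis using Wexp[OF that] by linarith
      qed
      have Wlim: "(W \<longlongrightarrow> 0) at_top"
      proof (rule tendsto_sandwich[of "\<lambda>_. 0" _ _ "\<lambda>t. W 0 * exp (- \<beta> * t)"])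
        show "\<forall>\<^sub>F t in at_top. 0 \<le> W t" using Wnn by simp
        show "\<forall>\<^sub>F t in at_top. W t \<le> W 0 * exp (- \<beta> * t)"
          using eventually_ge_at_top[of "0::real"] by eventually_elim (rule Wexp)
        show "((\<lambda>t. W 0 * exp (- \<beta> * t)) \<longlongrightarrow> 0) at_top" using \<beta>pos by real_asymp
      qed simp
      have sW: "((\<lambda>t. sqrt (W t)) \<longlongrightarrow> 0) at_top"
        using tendsto_real_sqrt[OF Wlim] by simp
      have sW1: "((\<lambda>t. sqrt (W t / \<alpha>1)) \<longlongrightarrow> 0) at_top"
        using tendsto_real_sqrt[OF tendsto_divide[OF Wlim tendsto_const[of \<alpha>1]]] alpha_pos by simp
      have xb: "x t \<le> sqrt (W t / \<alpha>1)" for t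
      proof -
        have "\<alpha>1 * (x t)^2 \<le> W t" using Wlow[of t] S0[of t] by simp
        then have "(x t)^2 \<le> W t / \<alpha>1" using alpha_pos by (simp add: field_simps)
        then show ?thesis by (rule real_le_rsqrt)
      qed
      have yb: "vnorm r (z t) \<le> sqrt (W t)" for t
      proof -
        have "(vnorm r (z t))^2 \<le> W t" using Wlow[of t] Sy[of t] x0[of t] alpha_pos
          by (smt (verit) zero_le_power2 mult_nonneg_nonneg)
        then show ?thesis by (rule real_le_rsqrt)
      qed
      show "(\<forall>i<r. ((\<lambda>t. \<phi> t i) \<longlongrightarrow> Gam \<gamma> r i * \<kappa> \<eta>e) at_top)
              \<and> (\<eta> \<longlongrightarrow> \<eta>e) at_top
              \<and> (\<exists>M. \<forall>t\<ge>0. vnorm r (\<phi> t) + norm (\<eta> t) \<le> M)"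
      proof (intro conjI allI impI)
        fix i assume ir: "i < r"
        have "((\<lambda>t. \<phi> t i - Gam \<gamma> r i * \<kappa> \<eta>e) \<longlongrightarrow> 0) at_top"
        proof (rule Lim_null_comparison[OF _ sW])
          show "\<forall>\<^sub>F t in at_top. norm (\<phi> t i - Gam \<gamma> r i * \<kappa> \<eta>e) \<le> sqrt (W t)"
          proof (rule always_eventually, rule allI)
            fix t
            have "\<bar>z t i\<bar> \<le> vnorm r (z t)" by (rule vnorm_comp[OF ir])
            then show "norm (\<phi> t i - Gam \<gamma> r i * \<kappa> \<eta>e) \<le> sqrt (W t)"
              using yb[of t] unfolding z_def P_def k0_def by simp
          qed
        qed
        then show "((\<lambda>t. \<phi> t i) \<longlongrightarrow> Gam \<gamma> r i * \<kappa> \<eta>e) at_top"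
          by (simp add: Lim_null[symmetric])
      next
        have "((\<lambda>t. \<eta> t - \<eta>e) \<longlongrightarrow> 0) at_top"
        proof (rule Lim_null_comparison[OF _ sW1])
          show "\<forall>\<^sub>F t in at_top. norm (\<eta> t - \<eta>e) \<le> sqrt (W t / \<alpha>1)"
            using xb unfolding x_def by simp
        qed
        then show "(\<eta> \<longlongrightarrow> \<eta>e) at_top" by (simp add: Lim_null[symmetric])
      next
        show "\<exists>M. \<forall>t\<ge>0. vnorm r (\<phi> t) + norm (\<eta> t) \<le> M"
        proof (intro exI allI impI)
          fix t :: real assume t0: "t \<ge> 0"
          have "\<phi> t = (\<lambda>i. z t i + P i)" by (rule ext) (simp add: z_def)
          then have "vnorm r (\<phi> t) \<le> vnorm r (z t) + vnorm r P"
            using vnorm_triangle[of r "z t" P] by simp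
          also have "vnorm r (z t) \<le> sqrt (W 0)"
            using yb[of t] Wle0[OF t0] by (meson order_trans real_sqrt_le_mono)
          finally have A: "vnorm r (\<phi> t) \<le> sqrt (W 0) + vnorm r P" by simp
          have "norm (\<eta> t) \<le> norm \<eta>e + norm (\<eta> t - \<eta>e)"
            by (metis add.commute diff_add_cancel norm_triangle_ineq)
          also have "norm (\<eta> t - \<eta>e) \<le> sqrt (W 0 / \<alpha>1)"
            using xb[of t] Wle0[OF t0] alpha_pos unfolding x_def
            by (meson order_trans real_sqrt_le_mono divide_right_mono less_imp_le)
          finally have B: "norm (\<eta> t) \<le> norm \<eta>e + sqrt (W 0 / \<alpha>1)" by simp
          show "vnorm r (\<phi> t) + norm (\<eta> t) \<le> sqrt (W 0) + vnorm r P + (norm \<eta>e + sqrt (W 0 / \<alpha>1))"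
            using A B by simp
        qed
      qed
    qed
  qed
qed

end
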